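(* For positive semidefinite operators $A,B$, $$\mathrm{Tr}\,(A+B)\,\mathcal{R}_{A+B}(A)\ge \mathrm{Tr}\,A\,\mathcal{T}_{A+B}(A).$$
   Context: All operators act on a finite-dimensional complex Hilbert space. For positive semidefinite $M$ and self-adjoint $\Delta$ supported in the support of $M$: $\mathcal{T}_M(\Delta)=\int_0^\infty (M+sI)^{-1}\Delta(M+sI)^{-1}\,ds$ (the first derivative $\frac{d}{dt}|_{t=0}\log(M+t\Delta)$), and $\mathcal{R}_M(\Delta)=2\int_0^\infty (M+sI)^{-1}\Delta(M+sI)^{-1}\Delta(M+sI)^{-1}\,ds$ (which equals $-\frac{d^2}{dt^2}|_{t=0}\log(M+t\Delta)$). *)

theory Defs
  imports "HOL-Analysis.Analysis" "HOL-Library.Complex_Order"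
begin

text \<open>Positive semidefinite: the quadratic form x* A x is a nonnegative real
  (complex order: 0 \<le> z iff z is real and nonnegative).\<close>
definition psd :: "complex^'n^'n \<Rightarrow> bool" where
  "psd A \<longleftrightarrow> (\<forall>x::complex^'n. 0 \<le> (\<Sum>i\<in>UNIV. cnj (x$i) * (A *v x)$i))"

definition resolv :: "complex^'n^'n \<Rightarrow> real \<Rightarrow> complex^'n^'n" where
  "resolv M s = matrix_inv (M + s *\<^sub>R mat 1)"

definition Tmap :: "complex^'n^'n \<Rightarrow> complex^'n^'n \<Rightarrow> complex^'n^'n" where
  "Tmap M D = integral {0<..} (\<lambda>s. resolv M s ** D ** resolv M s)"

definition Rmap :: "complex^'n^'n \<Rightarrow> complex^'n^'n \<Rightarrow> complex^'n^'n" where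
  "Rmap M D = 2 *\<^sub>R integral {0<..} (\<lambda>s. resolv M s ** D ** resolv M s ** D ** resolv M s)"

end

theory Submission
  imports Defs
begin


definition cdot :: "complex^'n \<Rightarrow> complex^'n \<Rightarrow> complex" where
  "cdot x y = (\<Sum>i\<in>UNIV. cnj (x$i) * y$i)"
definition cT :: "complex^'n^'n \<Rightarrow> complex^'n^'n" where
  "cT X = (\<chi> i j. cnj (X$j$i))"

lemma cdot_add_left: "cdot (x + y) z = cdot x z + cdot y z"
  by (simp add: cdot_def distrib_right sum.distrib)
lemma cdot_add_right: "cdot z (x + y) = cdot z x + cdot z y"
  by (simp add: cdot_def distrib_left sum.distrib)
lemma cdot_diff_left: "cdot (x - y) z = cdot x z - cdot y z"
  by (simp add: cdot_def left_diff_distrib sum_subtractf)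
lemma cdot_diff_right: "cdot z (x - y) = cdot z x - cdot z y"
  by (simp add: cdot_def right_diff_distrib sum_subtractf)
lemma cdot_smult_left: "cdot (c *s x) z = cnj c * cdot x z"
  by (simp add: cdot_def sum_distrib_left mult.assoc)
lemma cdot_smult_right: "cdot z (c *s x) = c * cdot z x"
  by (simp add: cdot_def sum_distrib_left mult.left_commute)
lemma cdot_cnj: "cnj (cdot x y) = cdot y x"
  by (simp add: cdot_def mult.commute)
lemma cdot_mult: "cdot x (X *v y) = cdot (cT X *v x) y"
proof -
  have "cdot x (X *v y) = (\<Sum>i\<in>UNIV. \<Sum>j\<in>UNIV. cnj (x$i) * (X$i$j * y$j))"
    by (simp add: cdot_def matrix_vector_mult_def sum_distrib_left)
  also have "\<dots> = (\<Sum>j\<in>UNIV. \<Sum>i\<in>UNIV. cnj (x$i) * (X$i$j * y$j))"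
    by (rule sum.swap)
  also have "\<dots> = cdot (cT X *v x) y"
    by (simp add: cdot_def matrix_vector_mult_def cT_def sum_distrib_right sum_distrib_left mult_ac)
  finally show ?thesis .
qed
lemma cdot_axis_left: "cdot (axis i c) z = cnj c * z$i"
proof -
  have "(\<lambda>ia. cnj (axis i c $ ia) * z$ia) = (\<lambda>ia. if ia = i then cnj c * z$ia else 0)"
    by (auto simp: axis_def)
  then show ?thesis by (simp only: cdot_def) simp
qed
lemma mv_axis: "(X *v axis j c) $ i = X$i$j * c"
  by (simp add: matrix_vector_mult_def axis_def if_distrib cong: if_cong)

lemma cdot_self: "cdot x x = of_real ((norm x)^2)"
proof -
  have "cdot x x = (\<Sum>i\<in>UNIV. of_real ((cmod (x$i))^2))"
    unfolding cdot_def by (intro sum.cong refl) (metis complex_norm_square mult.commute of_real_power)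
  also have "\<dots> = of_real (\<Sum>i\<in>UNIV. (cmod (x$i))^2)"
    by simp
  also have "(\<Sum>i\<in>UNIV. (cmod (x$i))^2) = (norm x)^2"
    by (simp add: norm_vec_def L2_set_def sum_nonneg)
  finally show ?thesis .
qed

lemma mv_smult: "(A::complex^'n^'n) *v (c *s v) = c *s (A *v v)"
  by (simp add: vec_eq_iff matrix_vector_mult_def sum_distrib_left mult_ac)

lemma psd_cdot: "psd A \<longleftrightarrow> (\<forall>x. 0 \<le> cdot x (A *v x))"
  by (simp add: psd_def cdot_def)

lemma qexp: "cdot (u + c *s v) ((A::complex^'n^'n) *v (u + c *s v)) = cdot u (A *v u) + c * cdot u (A *v v)
   + cnj c * cdot v (A *v u) + cnj c * c * cdot v (A *v v)"
  by (simp add: matrix_vector_right_distrib mv_smult cdot_add_left cdot_add_right cdot_smult_left cdot_smult_right algebra_simps)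

lemma nonneg_Im: "0 \<le> (z::complex) \<Longrightarrow> Im z = 0"
  by (simp add: less_eq_complex_def)

lemma psd_herm: assumes "psd A" shows "cT A = A"
proof -
  have q: "\<And>x. 0 \<le> cdot x (A *v x)" using assms psd_cdot by blast
  have "cnj (A$j$i) = A$i$j" for i j
  proof -
    let ?u = "axis i (1::complex)" and ?v = "axis j (1::complex)"
    have e1: "cdot ?u (A *v ?v) = A$i$j" and e2: "cdot ?v (A *v ?u) = A$j$i"
      by (simp_all add: cdot_axis_left mv_axis)
    have i1: "Im (cdot ?u (A *v ?u)) = 0" "Im (cdot ?v (A *v ?v)) = 0"
      using q nonneg_Im by blast+
    have "Im (cdot (?u + 1 *s ?v) (A *v (?u + 1 *s ?v))) = 0" using q nonneg_Im by blast
    then have a: "Im (A$i$j) + Im (A$j$i) = 0"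
      unfolding qexp e1 e2 using i1 by simp
    have "Im (cdot (?u + \<i> *s ?v) (A *v (?u + \<i> *s ?v))) = 0" using q nonneg_Im by blast
    then have b: "Re (A$i$j) - Re (A$j$i) = 0"
      unfolding qexp e1 e2 using i1 by simp
    show ?thesis using a b by (simp add: complex_eq_iff)
  qed
  then show ?thesis by (simp add: cT_def vec_eq_iff)
qed

lemma psd_zero: assumes "psd A" and "cdot x (A *v x) = 0" shows "A *v x = 0"
proof -
  have q: "\<And>x. 0 \<le> cdot x (A *v x)" using assms psd_cdot by blast
  define y where "y = A *v x"
  define a where "a = (norm y)^2"
  define br where "br = Re (cdot y (A *v y))"
  have br0: "0 \<le> br" using q[of y] by (simp add: br_def less_eq_complex_def)
  have bi: "Im (cdot y (A *v y)) = 0" using q[of y] nonneg_Im by blast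
  have c1: "cdot x (A *v y) = of_real a"
    by (simp add: cdot_mult psd_herm[OF assms(1)] y_def[symmetric] cdot_self a_def)
  have c2: "cdot y (A *v x) = of_real a"
    by (simp add: y_def[symmetric] cdot_self a_def)
  have main: "0 \<le> 2*t*a + t^2*br" for t :: real
  proof -
    have "0 \<le> Re (cdot (x + of_real t *s y) (A *v (x + of_real t *s y)))"
      using q by (simp add: less_eq_complex_def)
    also have "\<dots> = 2*t*a + t^2*br"
      unfolding qexp c1 c2 using assms(2) bi by (simp add: br_def power2_eq_square)
    finally show ?thesis .
  qed
  have a0: "0 \<le> a" by (simp add: a_def)
  have "0 \<le> 2*(-a/(br+1))*a + (-a/(br+1))^2*br" by (rule main)
  moreover have "2*(-a/(br+1))*a + (-a/(br+1))^2*br = (-2*a*a*(br+1) + a*a*br) / (br+1)^2"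
  proof -
    have nz: "br + 1 \<noteq> 0" using br0 by linarith
    show ?thesis using nz by (simp add: divide_simps power2_eq_square)
  qed
  ultimately have "0 \<le> (-2*a*a*(br+1) + a*a*br) / (br+1)^2" by simp
  then have "0 \<le> -2*a*a*(br+1) + a*a*br"
    using br0 by (simp add: zero_le_divide_iff)
  then have "a*a*(br+2) \<le> 0" by (simp add: algebra_simps)
  then have "a = 0" using br0 a0
    by (smt (verit, best) mult_nonneg_nonneg mult_pos_pos)
  then show ?thesis by (simp add: a_def y_def)
qed

lemma cT_mult: "cT (X ** Y) = cT Y ** cT X"
  by (simp add: cT_def matrix_matrix_mult_def vec_eq_iff mult.commute)
lemma cT_add: "cT (X + Y) = cT X + cT Y"
  by (simp add: cT_def vec_eq_iff)
lemma cT_diff: "cT (X - Y) = cT X - cT Y"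
  by (simp add: cT_def vec_eq_iff)
lemma cT_scaleR: "cT (c *\<^sub>R X) = c *\<^sub>R cT X"
  by (simp add: cT_def vec_eq_iff)
lemma cT_mat1: "cT (mat 1) = mat 1"
  by (simp add: cT_def vec_eq_iff mat_def)
lemma cT_cT: "cT (cT X) = X"
  by (simp add: cT_def vec_eq_iff)
lemma cT_zero: "cT 0 = 0"
  by (simp add: cT_def vec_eq_iff)

lemma psd_add: "psd A \<Longrightarrow> psd B \<Longrightarrow> psd (A + B)"
  by (simp add: psd_cdot matrix_vector_mult_add_rdistrib cdot_add_right add_nonneg_nonneg)

lemma ker_sub: assumes "psd A" "psd B" "(A + B) *v x = 0" shows "A *v x = 0"
proof -
  have "cdot x ((A + B) *v x) = 0" using assms(3) by (simp add: cdot_def)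
  then have "cdot x (A *v x) + cdot x (B *v x) = 0"
    by (simp add: matrix_vector_mult_add_rdistrib cdot_add_right)
  moreover have "0 \<le> cdot x (A *v x)" "0 \<le> cdot x (B *v x)" using assms psd_cdot by blast+
  ultimately have "cdot x (A *v x) = 0" by (simp add: add_nonneg_eq_0_iff)
  then show ?thesis using psd_zero assms(1) by blast
qed

definition nrm :: "complex^'n^'n \<Rightarrow> real" where
  "nrm X = (\<Sum>i\<in>UNIV. \<Sum>j\<in>UNIV. cmod (X$i$j))"

lemma nrm_nonneg: "0 \<le> nrm X"
  by (simp add: nrm_def sum_nonneg)

lemma nrm_entry: "cmod (X$i$j) \<le> nrm X"
proof -
  have "cmod (X$i$j) \<le> (\<Sum>j\<in>UNIV. cmod (X$i$j))"
    by (rule member_le_sum) auto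
  also have "\<dots> \<le> nrm X" unfolding nrm_def
    by (rule member_le_sum[where f="\<lambda>i. \<Sum>j\<in>UNIV. cmod (X$i$j)"]) (auto intro: sum_nonneg)
  finally show ?thesis .
qed

lemma nrm_add: "nrm (X + Y) \<le> nrm X + nrm Y"
  unfolding nrm_def sum.distrib[symmetric]
  by (intro sum_mono) (simp add: norm_triangle_ineq)
lemma nrm_diff: "nrm (X - Y) \<le> nrm X + nrm Y"
  unfolding nrm_def sum.distrib[symmetric]
  by (intro sum_mono) (simp add: norm_triangle_ineq4)
lemma nrm_scaleR: "nrm (c *\<^sub>R X) = \<bar>c\<bar> * nrm X"
  by (simp add: nrm_def sum_distrib_left)
lemma nrm_uminus: "nrm (- X) = nrm X"
  by (simp add: nrm_def)
lemma nrm_mat1: "nrm (mat 1 :: complex^'n^'n) = real CARD('n)"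
proof -
  have "nrm (mat 1 :: complex^'n^'n) = (\<Sum>i\<in>(UNIV::'n set). 1)"
    unfolding nrm_def by (intro sum.cong refl) (simp add: mat_def of_bool_def if_distrib cong: if_cong)
  then show ?thesis by simp
qed

lemma nrm_mult: "nrm (X ** Y) \<le> nrm X * nrm Y"
proof -
  have "nrm (X ** Y) \<le> (\<Sum>i\<in>UNIV. \<Sum>j\<in>UNIV. \<Sum>k\<in>UNIV. cmod (X$i$k) * cmod (Y$k$j))"
    unfolding nrm_def matrix_matrix_mult_def
    by (intro sum_mono) (simp add: norm_mult[symmetric] sum_norm_le)
  also have "\<dots> = (\<Sum>i\<in>UNIV. \<Sum>k\<in>UNIV. \<Sum>j\<in>UNIV. cmod (X$i$k) * cmod (Y$k$j))"
    by (intro sum.cong refl sum.swap)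
  also have "\<dots> \<le> (\<Sum>i\<in>UNIV. \<Sum>k\<in>UNIV. cmod (X$i$k) * nrm Y)"
    by (intro sum_mono) (simp add: sum_distrib_left[symmetric] mult_left_mono nrm_def
        member_le_sum[where f="\<lambda>k. \<Sum>j\<in>UNIV. cmod (Y$k$j)"] sum_nonneg)
  also have "\<dots> = nrm X * nrm Y"
    by (simp add: nrm_def sum_distrib_right)
  finally show ?thesis .
qed

lemma norm_le_nrm: "norm X \<le> nrm X"
proof -
  have "norm X \<le> (\<Sum>i\<in>UNIV. norm (X$i))"
    unfolding norm_vec_def by (rule L2_set_le_sum) simp
  also have "\<dots> \<le> nrm X" unfolding nrm_def
  proof (intro sum_mono)
    fix i show "norm (X$i) \<le> (\<Sum>j\<in>UNIV. cmod (X$i$j))"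
      unfolding norm_vec_def by (rule L2_set_le_sum) simp
  qed
  finally show ?thesis .
qed

lemma nrm_le_norm: "nrm X \<le> real (CARD('n)) * real (CARD('n)) * norm (X::complex^'n^'n)"
proof -
  have "nrm X \<le> (\<Sum>i\<in>(UNIV::'n set). \<Sum>j\<in>(UNIV::'n set). norm X)"
    unfolding nrm_def
  proof (intro sum_mono)
    fix i j show "cmod (X$i$j) \<le> norm X"
    proof -
      have "cmod (X$i$j) \<le> norm (X$i)" by (rule Finite_Cartesian_Product.norm_nth_le)
      also have "\<dots> \<le> norm X" by (rule Finite_Cartesian_Product.norm_nth_le)
      finally show ?thesis .
    qed
  qed
  then show ?thesis by simp
qed

lemma trace_nrm: "cmod (trace X) \<le> nrm X"
proof -
  have "cmod (trace X) \<le> (\<Sum>i\<in>UNIV. cmod (X$i$i))"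
    by (simp add: trace_def sum_norm_le)
  also have "\<dots> \<le> nrm X" unfolding nrm_def
    by (intro sum_mono member_le_sum) auto
  finally show ?thesis .
qed

lemma nrm_bound: "(\<And>i j. cmod (X$i$j) \<le> c) \<Longrightarrow> nrm (X::complex^'n^'n) \<le> real CARD('n) * real CARD('n) * c"
proof -
  assume h: "\<And>i j. cmod (X$i$j) \<le> c"
  have "nrm X \<le> (\<Sum>i\<in>(UNIV::'n set). \<Sum>j\<in>(UNIV::'n set). c)"
    unfolding nrm_def by (intro sum_mono h)
  then show ?thesis by simp
qed

lemma mm_scaleR_left: "(c *\<^sub>R X) ** (Y::complex^'n^'n) = c *\<^sub>R (X ** Y)"
  by (simp add: scalar_matrix_assoc)
lemma mm_scaleR_right: "(X::complex^'n^'n) ** (c *\<^sub>R Y) = c *\<^sub>R (X ** Y)"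
  by (simp add: matrix_matrix_mult_def sum_distrib_left mult_ac vec_eq_iff scaleR_sum_right)
lemma mm_add_left: "(X + Y) ** (Z::complex^'n^'n) = X ** Z + Y ** Z"
  by (simp add: matrix_matrix_mult_def vec_eq_iff sum.distrib distrib_right)
lemma mm_diff_left: "(X - Y) ** (Z::complex^'n^'n) = X ** Z - Y ** Z"
  by (simp add: matrix_matrix_mult_def vec_eq_iff sum_subtractf left_diff_distrib)
lemma mm_diff_right: "Z ** (X - Y) = Z ** X - Z ** (Y::complex^'n^'n)"
  by (simp add: matrix_matrix_mult_def vec_eq_iff sum_subtractf right_diff_distrib)
lemma mm_uminus_left: "(- X) ** (Z::complex^'n^'n) = - (X ** Z)"
  by (simp add: matrix_matrix_mult_def vec_eq_iff sum_negf)
lemma mm_uminus_right: "Z ** (- X) = - (Z ** (X::complex^'n^'n))"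
  by (simp add: matrix_matrix_mult_def vec_eq_iff sum_negf)
lemmas mm_simps = mm_scaleR_left mm_scaleR_right mm_add_left matrix_add_ldistrib mm_diff_left mm_diff_right
  mm_uminus_left mm_uminus_right

lemma mv_scaleR_mat1: "((s *\<^sub>R mat 1) :: complex^'n^'n) *v x = of_real s *s x"
proof -
  have "((s *\<^sub>R mat 1) :: complex^'n^'n) = mat (of_real s)"
    by (simp add: vec_eq_iff mat_def of_real_def)
  then show ?thesis by (simp add: vec_eq_iff matrix_vector_mult_def mat_def if_distrib if_distribR
     cong: if_cong)
qed

lemma cauchy_schwarz: "cmod (cdot x y) \<le> norm x * norm y"
proof -
  have "cmod (cdot x y) \<le> (\<Sum>i\<in>UNIV. cmod (x$i) * cmod (y$i))"
    unfolding cdot_def by (rule order_trans[OF norm_sum]) (simp add: norm_mult)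
  also have "\<dots> \<le> L2_set (\<lambda>i. cmod (x$i)) UNIV * L2_set (\<lambda>i. cmod (y$i)) UNIV"
    using L2_set_mult_ineq[of "\<lambda>i. cmod (x$i)" "\<lambda>i. cmod (y$i)" UNIV] by simp
  finally show ?thesis by (simp add: norm_vec_def)
qed

lemma shift_bound: fixes M :: "complex^'n^'n" assumes "psd M" "0 < s"
  shows "s * norm x \<le> norm ((M + s *\<^sub>R mat 1) *v x)"
proof -
  let ?y = "(M + s *\<^sub>R mat 1) *v x"
  have e: "cdot x ?y = cdot x (M *v x) + of_real s * of_real ((norm x)^2)"
    by (simp add: matrix_vector_mult_add_rdistrib cdot_add_right mv_scaleR_mat1 cdot_smult_right cdot_self)
  have "0 \<le> cdot x (M *v x)" using assms(1) psd_cdot by blast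
  then have "0 \<le> Re (cdot x (M *v x))" by (simp add: less_eq_complex_def)
  then have "s * (norm x)^2 \<le> Re (cdot x ?y)" using e by simp
  also have "\<dots> \<le> cmod (cdot x ?y)" by (rule complex_Re_le_cmod)
  also have "\<dots> \<le> norm x * norm ?y" by (rule cauchy_schwarz)
  finally have h: "s * (norm x)^2 \<le> norm x * norm ?y" .
  show ?thesis
  proof (cases "norm x = 0")
    case True then show ?thesis by simp
  next
    case False
    then have "0 < norm x" by simp
    with h show ?thesis by (simp add: power2_eq_square mult_ac)
  qed
qed

lemma shift_invertible: fixes M :: "complex^'n^'n" assumes "psd M" "0 < s" shows "invertible (M + s *\<^sub>R mat 1)"
proof -
  have "\<forall>x. (M + s *\<^sub>R mat 1) *v x = 0 \<longrightarrow> x = 0"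
    using shift_bound[OF assms] assms(2)
    by (metis mult_le_0_iff norm_eq_zero norm_ge_zero norm_zero order.strict_iff_not order_antisym)
  then show ?thesis
    using matrix_left_invertible_ker invertible_left_inverse by blast
qed

lemma resolv_inv: fixes M :: "complex^'n^'n" assumes "psd M" "0 < s"
  shows "(M + s *\<^sub>R mat 1) ** resolv M s = mat 1" "resolv M s ** (M + s *\<^sub>R mat 1) = mat 1"
proof -
  have "\<exists>A'. (M + s *\<^sub>R mat 1) ** A' = mat 1 \<and> A' ** (M + s *\<^sub>R mat 1) = mat 1"
    using shift_invertible[OF assms] invertible_def by blast
  then have "(M + s *\<^sub>R mat 1) ** resolv M s = mat 1 \<and> resolv M s ** (M + s *\<^sub>R mat 1) = mat 1"
    unfolding resolv_def matrix_inv_def by (rule someI_ex)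
  then show "(M + s *\<^sub>R mat 1) ** resolv M s = mat 1" "resolv M s ** (M + s *\<^sub>R mat 1) = mat 1"
    by auto
qed

lemma resolv_MR: fixes M :: "complex^'n^'n" assumes "psd M" "0 < s"
  shows "M ** resolv M s = mat 1 - s *\<^sub>R resolv M s" "resolv M s ** M = mat 1 - s *\<^sub>R resolv M s"
  using resolv_inv[OF assms] by (simp_all add: mm_simps algebra_simps)

lemma resolv_comm: fixes M :: "complex^'n^'n" assumes "psd M" "0 < s" shows "M ** resolv M s = resolv M s ** M"
  using resolv_MR[OF assms] by simp

lemma resolv_vec_bound: fixes M :: "complex^'n^'n" assumes "psd M" "0 < s" shows "norm (resolv M s *v y) \<le> norm y / s"
proof -
  have "(M + s *\<^sub>R mat 1) *v (resolv M s *v y) = y"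
    by (simp add: matrix_vector_mul_assoc resolv_inv[OF assms])
  then have "s * norm (resolv M s *v y) \<le> norm y" using shift_bound[OF assms] by metis
  then show ?thesis using assms(2) by (simp add: field_simps)
qed

lemma resolv_entry: fixes M :: "complex^'n^'n" assumes "psd M" "0 < s" shows "cmod (resolv M s $ i $ j) \<le> 1 / s"
proof -
  have "resolv M s $ i $ j = (resolv M s *v axis j 1) $ i" by (simp add: mv_axis)
  then have "cmod (resolv M s $ i $ j) \<le> norm (resolv M s *v axis j 1)"
    by (metis Finite_Cartesian_Product.norm_nth_le)
  also have "\<dots> \<le> norm (axis j (1::complex)) / s" by (rule resolv_vec_bound[OF assms])
  finally show ?thesis by simp
qed

lemma resolv_nrm: fixes M :: "complex^'n^'n" assumes "psd M" "0 < s"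
  shows "nrm (resolv M s) \<le> real CARD('n) * real CARD('n) / s"
  using nrm_bound[of "resolv M s" "1/s", OF resolv_entry[OF assms]] by simp

lemma resolv_ident: fixes M :: "complex^'n^'n" assumes "psd M" "0 < s" "0 < t"
  shows "resolv M t - resolv M s = (s - t) *\<^sub>R (resolv M t ** resolv M s)"
proof -
  let ?Rs = "resolv M s" and ?Rt = "resolv M t"
  have "?Rt - ?Rs = ?Rt ** ((M + s *\<^sub>R mat 1) ** ?Rs) - (?Rt ** (M + t *\<^sub>R mat 1)) ** ?Rs"
    by (simp add: resolv_inv[OF assms(1,2)] resolv_inv[OF assms(1,3)])
  also have "\<dots> = ?Rt ** ((M + s *\<^sub>R mat 1) - (M + t *\<^sub>R mat 1)) ** ?Rs"
    by (simp add: mm_simps matrix_mul_assoc)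
  also have "(M + s *\<^sub>R mat 1) - (M + t *\<^sub>R mat 1) = (s - t) *\<^sub>R (mat 1 :: complex^'n^'n)"
    by (simp add: algebra_simps)
  finally show ?thesis by (simp add: mm_simps)
qed

lemma norm_mm: fixes X Y :: "complex^'n^'n" shows "norm (X ** Y) \<le> norm X * norm Y * (real CARD('n) ^ 4)"
proof -
  have "norm (X ** Y) \<le> nrm X * nrm Y" using norm_le_nrm nrm_mult order_trans by blast
  also have "\<dots> \<le> (real CARD('n) * real CARD('n) * norm X) * (real CARD('n) * real CARD('n) * norm Y)"
    by (intro mult_mono nrm_le_norm) (auto intro: nrm_nonneg)
  finally show ?thesis by (simp add: algebra_simps power4_eq_xxxx)
qed

lemma bb_mm: "bounded_bilinear ((**) :: complex^'n^'n \<Rightarrow> complex^'n^'n \<Rightarrow> complex^'n^'n)"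
proof
  show "\<exists>K. \<forall>(a::complex^'n^'n) (b::complex^'n^'n). norm (a ** b) \<le> norm a * norm b * K"
  proof -
    have "\<forall>(a::complex^'n^'n) (b::complex^'n^'n). norm (a ** b) \<le> norm a * norm b * (real CARD('n) ^ 4)"
      using norm_mm by blast
    then show ?thesis by blast
  qed
qed (simp_all add: mm_simps matrix_add_ldistrib)

lemma bl_trace: "bounded_linear (trace :: complex^'n^'n \<Rightarrow> complex)"
proof (rule bounded_linear_intro[where K="real CARD('n) * real CARD('n)"])
  show "trace (x + y) = trace x + trace y" for x y :: "complex^'n^'n" by (rule trace_add)
  show "trace (r *\<^sub>R x) = r *\<^sub>R trace x" for r and x :: "complex^'n^'n"
    by (simp add: trace_def scaleR_sum_right)
  show "norm (trace x) \<le> norm x * (real CARD('n) * real CARD('n))" for x :: "complex^'n^'n"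
    using order_trans[OF trace_nrm nrm_le_norm] by (simp add: mult_ac)
qed

lemma eventually_pos: "0 < (s::real) \<Longrightarrow> \<forall>\<^sub>F t in at s. s/2 < t"
  using order_tendstoD(1)[OF tendsto_ident_at, of "s/2" s UNIV] by simp

lemma resolv_cont: fixes M :: "complex^'n^'n" assumes "psd M" "0 < s"
  shows "((\<lambda>t. resolv M t) \<longlongrightarrow> resolv M s) (at s)"
proof -
  define K where "K = real CARD('n) * real CARD('n)"
  have K0: "0 \<le> K" by (simp add: K_def)
  have "((\<lambda>t. resolv M t - resolv M s) \<longlongrightarrow> 0) (at s)"
  proof (rule Lim_null_comparison)
    show "\<forall>\<^sub>F t in at s. norm (resolv M t - resolv M s) \<le> \<bar>s - t\<bar> * (K / (s/2)) * (K / s)"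
      using eventually_pos[OF assms(2)]
    proof (rule eventually_mono)
      fix t assume t: "s/2 < t"
      then have t0: "0 < t" using assms(2) by simp
      have "norm (resolv M t - resolv M s) \<le> nrm (resolv M t - resolv M s)" by (rule norm_le_nrm)
      also have "\<dots> = \<bar>s - t\<bar> * nrm (resolv M t ** resolv M s)"
        by (simp add: resolv_ident[OF assms t0] nrm_scaleR)
      also have "\<dots> \<le> \<bar>s - t\<bar> * (nrm (resolv M t) * nrm (resolv M s))"
        by (intro mult_left_mono nrm_mult) simp
      also have "\<dots> \<le> \<bar>s - t\<bar> * ((K / (s/2)) * (K / s))"
      proof (intro mult_left_mono mult_mono)
        show "nrm (resolv M t) \<le> K / (s/2)"
          using resolv_nrm[OF assms(1) t0] t K0 assms(2)
          by (smt (verit, best) K_def divide_left_mono mult_pos_pos zero_less_divide_iff)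
        show "nrm (resolv M s) \<le> K / s" using resolv_nrm[OF assms] by (simp add: K_def)
      qed (use K0 assms(2) nrm_nonneg in auto)
      finally show "norm (resolv M t - resolv M s) \<le> \<bar>s - t\<bar> * (K / (s/2)) * (K / s)"
        by (simp add: mult_ac)
    qed
    show "((\<lambda>t. \<bar>s - t\<bar> * (K / (s/2)) * (K / s)) \<longlongrightarrow> 0) (at s)"
      by (rule tendsto_eq_intros refl | simp)+
  qed
  then show ?thesis by (simp add: LIM_zero_iff)
qed

lemma resolv_deriv: fixes M :: "complex^'n^'n" assumes "psd M" "0 < s"
  shows "((\<lambda>t. resolv M t) has_vector_derivative (- (resolv M s ** resolv M s))) (at s)"
  unfolding has_vector_derivative_def has_derivative_iff_norm
proof (intro conjI)
  show "bounded_linear (\<lambda>h. h *\<^sub>R - (resolv M s ** resolv M s))"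
    by (rule bounded_linear_scaleR_left)
  let ?R = "\<lambda>t. resolv M t"
  have lim: "((\<lambda>t. norm ((?R t - ?R s) ** ?R s)) \<longlongrightarrow> 0) (at s)"
  proof -
    have "((\<lambda>t. (?R t - ?R s) ** ?R s) \<longlongrightarrow> (?R s - ?R s) ** ?R s) (at s)"
      by (intro bounded_bilinear.tendsto[OF bb_mm] tendsto_diff resolv_cont[OF assms] tendsto_const)
    then show ?thesis using tendsto_norm by fastforce
  qed
  show "((\<lambda>y. norm (?R y - ?R s - (y - s) *\<^sub>R - (?R s ** ?R s)) / norm (y - s)) \<longlongrightarrow> 0) (at s)"
  proof (rule Lim_transform_eventually[OF lim])
    show "\<forall>\<^sub>F t in at s. norm ((?R t - ?R s) ** ?R s) = norm (?R t - ?R s - (t - s) *\<^sub>R - (?R s ** ?R s)) / norm (t - s)"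
      using eventually_conj[OF eventually_pos[OF assms(2)] eventually_neq_at_within[where x=s]]
    proof (rule eventually_mono)
      fix t assume t: "s/2 < t \<and> t \<noteq> s"
      then have t0: "0 < t" using assms(2) by simp
      have d: "?R t - ?R s = (s - t) *\<^sub>R (?R t ** ?R s)" by (rule resolv_ident[OF assms t0])
      have "?R t - ?R s - (t - s) *\<^sub>R - (?R s ** ?R s) = (s - t) *\<^sub>R (?R t ** ?R s) - (s - t) *\<^sub>R (?R s ** ?R s)"
        by (subst d[symmetric]) (simp add: algebra_simps)
      also have "\<dots> = (s - t) *\<^sub>R ((?R t - ?R s) ** ?R s)"
        by (simp add: mm_diff_left scaleR_diff_right)
      finally have "?R t - ?R s - (t - s) *\<^sub>R - (?R s ** ?R s) = (s - t) *\<^sub>R ((?R t - ?R s) ** ?R s)" .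
      then show "norm ((?R t - ?R s) ** ?R s) = norm (?R t - ?R s - (t - s) *\<^sub>R - (?R s ** ?R s)) / norm (t - s)"
        using t by (simp add: abs_minus_commute[of s t])
    qed
  qed
qed



fun mpow :: "complex^'n^'n \<Rightarrow> nat \<Rightarrow> complex^'n^'n" where
  "mpow X 0 = mat 1"
| "mpow X (Suc k) = X ** mpow X k"

lemma mm_sum_right: "(X::complex^'n^'n) ** sum f S = (\<Sum>i\<in>S. X ** f i)"
  by (induct S rule: infinite_finite_induct) (simp_all add: matrix_add_ldistrib)
lemma mm_sum_left: "sum f S ** (X::complex^'n^'n) = (\<Sum>i\<in>S. f i ** X)"
  by (induct S rule: infinite_finite_induct) (simp_all add: mm_add_left)
lemma cT_sum: "cT (sum f S) = (\<Sum>i\<in>S. cT (f i))"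
  by (induct S rule: infinite_finite_induct) (simp_all add: cT_add cT_zero)

lemma mpow_comm: "M ** mpow M k = mpow M k ** M"
proof (induct k)
  case (Suc k)
  have "(M ** mpow M k) ** M = M ** (mpow M k ** M)" by (simp add: matrix_mul_assoc)
  also have "\<dots> = M ** (M ** mpow M k)" by (simp add: Suc)
  finally show ?case by simp
qed simp

lemma mpow_cT: "cT M = M \<Longrightarrow> cT (mpow M k) = mpow M k"
  by (induct k) (simp_all add: cT_mat1 cT_mult mpow_comm)

lemma poly_comm: "M ** (\<Sum>k\<le>K. d k *\<^sub>R mpow M k) = (\<Sum>k\<le>K. d k *\<^sub>R mpow M k) ** M"
  by (simp add: mm_sum_right mm_sum_left mm_simps mpow_comm)

lemma poly_herm: "cT M = M \<Longrightarrow> cT (\<Sum>k\<le>K. d k *\<^sub>R mpow M k) = (\<Sum>k\<le>K. d k *\<^sub>R mpow M k)"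
  by (simp add: cT_sum cT_scaleR mpow_cT)

lemma herm_MMZ: assumes "cT M = M" "M ** (M ** Z) = 0" shows "M ** Z = 0"
proof -
  have "(M ** Z) *v x = 0 *v x" for x
  proof -
    let ?z = "Z *v x"
    have "M *v (M *v ?z) = 0" using assms(2)
      by (metis matrix_vector_mul_assoc matrix_vector_mult_0 times0_left matrix_eq)
    then have "cdot (M *v ?z) (M *v ?z) = 0"
      using cdot_mult[of ?z M "M *v ?z"] assms(1) by (simp add: cdot_def)
    then have "M *v ?z = 0" by (simp add: cdot_self)
    then show ?thesis by (simp add: matrix_vector_mul_assoc)
  qed
  then show ?thesis using matrix_eq by blast
qed

lemma exists_annih: fixes M :: "complex^'n^'n"
  shows "\<exists>(c::nat \<Rightarrow> real) N. (\<exists>k\<le>N. c k \<noteq> 0) \<and> (\<Sum>k\<le>N. c k *\<^sub>R mpow M k) = 0"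
proof -
  define D where "D = DIM(complex^'n^'n)"
  show ?thesis
  proof (cases "inj_on (mpow M) {..D}")
    case True
    define S where "S = mpow M ` {..D}"
    have cS: "card S = D + 1" unfolding S_def using card_image[OF True] by simp
    have fS: "finite S" unfolding S_def by simp
    have "\<not> independent S"
    proof
      assume "independent S"
      then have "finite S \<and> card S \<le> DIM(complex^'n^'n)" by (rule independent_bound)
      then have "card S \<le> D" unfolding D_def by (rule conjunct2)
      then show False using cS by simp
    qed
    then obtain u where u: "\<exists>v\<in>S. u v \<noteq> 0" "(\<Sum>v\<in>S. u v *\<^sub>R v) = 0"
      using real_vector.dependent_finite[OF fS] by blast
    have "(\<Sum>v\<in>S. u v *\<^sub>R v) = (\<Sum>k\<le>D. u (mpow M k) *\<^sub>R mpow M k)"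
      unfolding S_def by (subst sum.reindex[OF True]) (simp add: comp_def)
    then have "(\<Sum>k\<le>D. u (mpow M k) *\<^sub>R mpow M k) = 0" using u(2) by simp
    moreover have "\<exists>k\<le>D. u (mpow M k) \<noteq> 0" using u(1) unfolding S_def by blast
    ultimately show ?thesis by (intro exI[of _ "\<lambda>k. u (mpow M k)"] exI[of _ D]) simp
  next
    case False
    then obtain i j where ij: "i \<noteq> j" "mpow M i = mpow M j"
      unfolding inj_on_def by blast
    define c :: "nat \<Rightarrow> real" where "c = (\<lambda>k. if k = i then 1 else if k = j then -1 else 0)"
    define N where "N = max i j"
    have "(\<Sum>k\<le>N. c k *\<^sub>R mpow M k) = (\<Sum>k\<in>{i,j}. c k *\<^sub>R mpow M k)"
    proof (rule sum.mono_neutral_right)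
      show "finite {..N}" by simp
      show "{i, j} \<subseteq> {..N}" by (simp add: N_def)
      show "\<forall>k\<in>{..N} - {i, j}. c k *\<^sub>R mpow M k = 0" by (simp add: c_def)
    qed
    also have "\<dots> = c i *\<^sub>R mpow M i + c j *\<^sub>R mpow M j" using ij(1) by simp
    also have "\<dots> = 0" using ij by (simp add: c_def)
    finally have "(\<Sum>k\<le>N. c k *\<^sub>R mpow M k) = 0" .
    moreover have "\<exists>k\<le>N. c k \<noteq> 0" using ij(1) by (intro exI[of _ i]) (simp add: c_def N_def)
    ultimately show ?thesis by (intro exI[of _ c] exI[of _ N]) simp
  qed
qed

lemma gap_aux: assumes "cT M = M"
  shows "\<forall>c. (\<exists>k\<le>N. c k \<noteq> 0) \<longrightarrow> M ** (\<Sum>k\<le>N. c k *\<^sub>R mpow M k) = 0 \<longrightarrow>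
     (\<exists>Q d K. M ** M ** Q = M \<and> Q = (\<Sum>k\<le>K. d k *\<^sub>R mpow M k))"
proof (induct N)
  case 0
  show ?case
  proof (intro allI impI)
    fix c :: "nat \<Rightarrow> real" assume "\<exists>k\<le>0. c k \<noteq> 0" "M ** (\<Sum>k\<le>0. c k *\<^sub>R mpow M k) = 0"
    then have "c 0 \<noteq> 0" "c 0 *\<^sub>R M = 0" by (auto simp: mm_simps)
    then have "M = 0" by simp
    then show "\<exists>Q d K. M ** M ** Q = M \<and> Q = (\<Sum>k\<le>K. d k *\<^sub>R mpow M k)"
      by (intro exI[of _ 0] exI[of _ "\<lambda>k. 0"] exI[of _ 0]) simp
  qed
next
  case (Suc N)
  show ?case
  proof (intro allI impI)
    fix c :: "nat \<Rightarrow> real" assume nz: "\<exists>k\<le>Suc N. c k \<noteq> 0"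
      and z: "M ** (\<Sum>k\<le>Suc N. c k *\<^sub>R mpow M k) = 0"
    define T where "T = (\<Sum>k\<le>N. c (Suc k) *\<^sub>R mpow M k)"
    have split: "(\<Sum>k\<le>Suc N. c k *\<^sub>R mpow M k) = c 0 *\<^sub>R mat 1 + M ** T"
      unfolding sum.atMost_Suc_shift by (simp add: T_def mm_sum_right mm_simps)
    show "\<exists>Q d K. M ** M ** Q = M \<and> Q = (\<Sum>k\<le>K. d k *\<^sub>R mpow M k)"
    proof (cases "c 0 = 0")
      case True
      then have "M ** (M ** T) = 0" using z unfolding split by simp
      then have "M ** T = 0" by (rule herm_MMZ[OF assms])
      moreover have "\<exists>k\<le>N. c (Suc k) \<noteq> 0" using nz True
        by (metis Suc_le_mono not0_implies_Suc)
      ultimately show ?thesis using Suc[rule_format, of "\<lambda>k. c (Suc k)"] by (simp add: T_def)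
    next
      case False
      have "M ** (c 0 *\<^sub>R mat 1 + M ** T) = 0" using z unfolding split .
      then have "c 0 *\<^sub>R M + M ** M ** T = 0" by (simp add: mm_simps matrix_mul_assoc)
      then have e: "M ** M ** T = - (c 0 *\<^sub>R M)" by (simp add: eq_neg_iff_add_eq_0 add.commute)
      define Q where "Q = (- 1 / c 0) *\<^sub>R T"
      have "M ** M ** Q = M" using False by (simp add: Q_def mm_simps e)
      moreover have "Q = (\<Sum>k\<le>N. (- 1 / c 0 * c (Suc k)) *\<^sub>R mpow M k)"
        by (simp add: Q_def T_def scaleR_sum_right)
      ultimately show ?thesis by (intro exI[of _ Q] exI[of _ "\<lambda>k. - 1 / c 0 * c (Suc k)"] exI[of _ N]) simp
    qed
  qed
qed

lemma gap: assumes "cT M = M"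
  shows "\<exists>Q. M ** M ** Q = M \<and> M ** Q = Q ** M \<and> cT Q = Q"
proof -
  obtain c N where c: "\<exists>k\<le>N. c k \<noteq> 0" "(\<Sum>k\<le>N. c k *\<^sub>R mpow M k) = 0"
    using exists_annih by blast
  then obtain Q d K where "M ** M ** Q = M" "Q = (\<Sum>k\<le>K. d k *\<^sub>R mpow M k)"
    using gap_aux[OF assms, rule_format, of N c] by auto
  then show ?thesis using poly_comm poly_herm[OF assms] by blast
qed



lemma bound_combine:
  fixes x C1 C2 s :: real
  assumes "0 < s" "s \<le> 1 \<Longrightarrow> x \<le> C1" "1 \<le> s \<Longrightarrow> x \<le> C2 / s^2" "0 \<le> C1" "0 \<le> C2"
  shows "x \<le> (4 * C1 + 4 * C2) / (1 + s)^2"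
proof (cases "s \<le> 1")
  case True
  have "(1 + s)^2 \<le> 2^2" using True assms(1) by (intro power_mono) auto
  then have "(1 + s)^2 \<le> 4" by simp
  then have "C1 * (1 + s)^2 \<le> C1 * 4" using assms(4) by (rule mult_left_mono)
  then have "C1 * (1 + s)^2 \<le> 4 * C1 + 4 * C2" using assms(5) by linarith
  then have "C1 \<le> (4 * C1 + 4 * C2) / (1 + s)^2" using assms(1) by (simp add: field_simps)
  then show ?thesis using assms(2) True by linarith
next
  case False
  then have s1: "1 \<le> s" by simp
  have "C2 / s^2 \<le> (4 * C1 + 4 * C2) / (1 + s)^2"
  proof -
    have "C2 * (1 + s)^2 \<le> (4 * C1 + 4 * C2) * s^2"
    proof -
      have "(1 + s)^2 \<le> (2 * s)^2" using s1 by (intro power_mono) auto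
      then have "(1 + s)^2 \<le> 4 * s^2" by (simp add: power_mult_distrib)
      then have "C2 * (1 + s)^2 \<le> C2 * (4 * s^2)" using assms(5) by (intro mult_left_mono)
      also have "\<dots> \<le> (4 * C1 + 4 * C2) * s^2" using assms(4) by (simp add: algebra_simps)
      finally show ?thesis .
    qed
    then show ?thesis using assms(1) by (simp add: field_simps)
  qed
  then show ?thesis using assms(3) s1 by linarith
qed

lemma nrm_mult3: "nrm (X ** Y ** Z) \<le> nrm X * nrm Y * nrm Z"
proof -
  have "nrm (X ** Y ** Z) \<le> nrm (X ** Y) * nrm Z" by (rule nrm_mult)
  also have "\<dots> \<le> nrm X * nrm Y * nrm Z" by (intro mult_right_mono nrm_mult nrm_nonneg)
  finally show ?thesis .
qed

lemma nrm_multX: "nrm (X ** (Y ** Z)) \<le> nrm X * (nrm Y * nrm Z)"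
proof -
  have "nrm (X ** (Y ** Z)) \<le> nrm X * nrm (Y ** Z)" by (rule nrm_mult)
  also have "\<dots> \<le> nrm X * (nrm Y * nrm Z)" by (intro mult_left_mono nrm_mult nrm_nonneg)
  finally show ?thesis .
qed

lemma integrable_inv_sq: "set_integrable lborel {0<..} (\<lambda>s::real. 1 / (1 + s)^2)"
proof -
  have "set_integrable lborel (einterval 0 \<infinity>) (\<lambda>s::real. 1 / (1 + s)^2)"
  proof (rule interval_integral_FTC_nonneg(1)[where F="\<lambda>x. - 1 / (1 + x)" and A="-1" and B=0])
    show "(0::ereal) < \<infinity>" by simp
    show "DERIV (\<lambda>x. - 1 / (1 + x)) x :> 1 / (1 + x)^2" if "0 < ereal x" "ereal x < \<infinity>" for x
    proof -
      have "x > 0" using that by simp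
      then show ?thesis
        by (auto intro!: derivative_eq_intros simp: power2_eq_square field_simps)
    qed
    show "isCont (\<lambda>x::real. 1 / (1 + x)^2) x" if "0 < ereal x" "ereal x < \<infinity>" for x
    proof -
      have "x > 0" using that by simp
      then show ?thesis by (intro continuous_intros) auto
    qed
    show "AE x in lborel. 0 < ereal x \<longrightarrow> ereal x < \<infinity> \<longrightarrow> 0 \<le> 1 / (1 + x)^2" by simp
    show "(((\<lambda>x. - 1 / (1 + x)) \<circ> real_of_ereal) \<longlongrightarrow> - 1) (at_right 0)"
    proof -
      have "isCont (\<lambda>x::real. - 1 / (1 + x)) 0" by (intro continuous_intros) auto
      then have "((\<lambda>x::real. - 1 / (1 + x)) \<longlongrightarrow> - 1) (at 0)" by (simp add: isCont_def)
      then have "((\<lambda>x::real. - 1 / (1 + x)) \<longlongrightarrow> - 1) (at_right 0)"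
        by (rule tendsto_mono[OF at_le, rotated]) simp
      then show ?thesis unfolding zero_ereal_def ereal_tendsto_simps .
    qed
    show "(((\<lambda>x. - 1 / (1 + x)) \<circ> real_of_ereal) \<longlongrightarrow> 0) (at_left \<infinity>)"
      unfolding ereal_tendsto_simps by real_asymp
  qed
  then show ?thesis by (simp add: zero_ereal_def)
qed

lemma nrm_bound_integrable:
  fixes f :: "real \<Rightarrow> complex^'n^'n"
  assumes cont: "\<And>s. 0 < s \<Longrightarrow> isCont f s" and b: "\<And>s. 0 < s \<Longrightarrow> nrm (f s) \<le> K / (1 + s)^2"
  shows "set_integrable lborel {0<..} f"
proof (rule set_integrable_bound)
  show "set_integrable lborel {0<..} (\<lambda>s::real. K * (1 / (1 + s)^2))"
    using integrable_inv_sq by (rule set_integrable_mult_right)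
  show "set_borel_measurable lborel {0<..} f"
    unfolding set_borel_measurable_def measurable_lborel2
    by (rule borel_measurable_continuous_on_indicator) (auto intro: continuous_at_imp_continuous_on cont)
  show "AE x in lborel. x \<in> {0<..} \<longrightarrow> norm (f x) \<le> norm (K * (1 / (1 + x)^2))"
  proof (rule AE_I2, intro impI)
    fix x :: real assume "x \<in> {0<..}"
    then have x: "0 < x" by simp
    have "norm (f x) \<le> nrm (f x)" by (rule norm_le_nrm)
    also have "\<dots> \<le> K / (1 + x)^2" by (rule b[OF x])
    also have "\<dots> \<le> norm (K * (1 / (1 + x)^2))" by simp (intro divide_right_mono, auto)
    finally show "norm (f x) \<le> norm (K * (1 / (1 + x)^2))" .
  qed
qed

lemma norm_bound_integrable:
  fixes f :: "real \<Rightarrow> 'a::euclidean_space"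
  assumes cont: "\<And>s. 0 < s \<Longrightarrow> isCont f s" and b: "\<And>s. 0 < s \<Longrightarrow> norm (f s) \<le> K / (1 + s)^2"
  shows "set_integrable lborel {0<..} f"
proof (rule set_integrable_bound)
  show "set_integrable lborel {0<..} (\<lambda>s::real. K * (1 / (1 + s)^2))"
    using integrable_inv_sq by (rule set_integrable_mult_right)
  show "set_borel_measurable lborel {0<..} f"
    unfolding set_borel_measurable_def measurable_lborel2
    by (rule borel_measurable_continuous_on_indicator) (auto intro: continuous_at_imp_continuous_on cont)
  show "AE x in lborel. x \<in> {0<..} \<longrightarrow> norm (f x) \<le> norm (K * (1 / (1 + x)^2))"
  proof (rule AE_I2, intro impI)
    fix x :: real assume "x \<in> {0<..}"
    then have x: "0 < x" by simp
    have "norm (f x) \<le> K / (1 + x)^2" by (rule b[OF x])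
    also have "\<dots> \<le> norm (K * (1 / (1 + x)^2))" by simp (intro divide_right_mono, auto)
    finally show "norm (f x) \<le> norm (K * (1 / (1 + x)^2))" .
  qed
qed

lemma trace_scaleR: "trace (c *\<^sub>R (X::complex^'n^'n)) = c *\<^sub>R trace X"
  by (simp add: trace_def scaleR_sum_right)
lemma trace_uminus: "trace (- (X::complex^'n^'n)) = - trace X"
  by (simp add: trace_def sum_negf)

lemma bl_trace_mult: "bounded_linear (\<lambda>X. trace ((C::complex^'n^'n) ** X))"
  by (rule bounded_linear_compose[OF bl_trace bounded_bilinear.bounded_linear_right[OF bb_mm]])

lemma set_integrable_bl:
  fixes f :: "real \<Rightarrow> 'a::euclidean_space"
  assumes "set_integrable lborel S f" "bounded_linear T"
  shows "set_integrable lborel S (\<lambda>x. (T (f x) :: 'b::euclidean_space))"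
proof -
  have i: "integrable lborel (\<lambda>x. T (indicator S x *\<^sub>R f x))"
    using integrable_bounded_linear[OF assms(2)] assms(1) unfolding set_integrable_def by blast
  have eq: "(\<lambda>x. T (indicator S x *\<^sub>R f x)) = (\<lambda>x. indicator S x *\<^sub>R T (f x))"
    using linear_scale[OF bounded_linear.linear[OF assms(2)]] by auto
  show ?thesis using i unfolding set_integrable_def eq .
qed

locale L =
  fixes A B :: "complex^'n^'n"
  assumes pA: "psd A" and pB: "psd B"
begin

abbreviation "M \<equiv> A + B"
abbreviation "R \<equiv> resolv M"

lemma pM: "psd M" using pA pB psd_add by blast
lemma hM: "cT M = M" using pM psd_herm by blast
lemma hA: "cT A = A" using pA psd_herm by blast

definition Q where "Q = (SOME Q. M ** M ** Q = M \<and> M ** Q = Q ** M \<and> cT Q = Q)"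
lemma Q: "M ** M ** Q = M" "M ** Q = Q ** M" "cT Q = Q"
  using someI_ex[OF gap[OF hM]] unfolding Q_def by auto

lemma AE: "A ** (M ** Q) = A"
proof -
  have "M ** (mat 1 - M ** Q) = 0" using Q(1) by (simp add: mm_simps matrix_mul_assoc)
  then have "(M ** (mat 1 - M ** Q)) *v x = 0" for x by simp
  then have "A *v ((mat 1 - M ** Q) *v x) = 0" for x
    using ker_sub[OF pA pB] by (metis matrix_vector_mul_assoc)
  then have "A ** (mat 1 - M ** Q) = 0"
    by (metis matrix_eq matrix_vector_mul_assoc matrix_vector_mult_0 times0_left)
  then show ?thesis by (simp add: mm_simps)
qed

lemma EA: "(M ** Q) ** A = A"
proof -
  have "cT (A ** (M ** Q)) = cT A" using AE by simp
  then show ?thesis by (simp add: cT_mult hA hM Q(2,3))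
qed

lemma RM_nrm: assumes "0 < s" "s \<le> 1"
  shows "nrm (R s ** M) \<le> real CARD('n) + real CARD('n) * real CARD('n)"
proof -
  have "nrm (R s ** M) = nrm (mat 1 - s *\<^sub>R R s)" using resolv_MR[OF pM assms(1)] by simp
  also have "\<dots> \<le> nrm (mat 1 :: complex^'n^'n) + s * nrm (R s)"
    using nrm_diff[of "mat 1" "s *\<^sub>R R s"] assms(1) by (simp add: nrm_scaleR)
  also have "s * nrm (R s) \<le> real CARD('n) * real CARD('n)"
    using resolv_nrm[OF pM assms(1)] assms(1) by (simp add: field_simps)
  finally show ?thesis by (simp add: nrm_mat1)
qed

lemma MR_nrm: assumes "0 < s" "s \<le> 1"
  shows "nrm (M ** R s) \<le> real CARD('n) + real CARD('n) * real CARD('n)"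
  using RM_nrm[OF assms] resolv_comm[OF pM assms(1)] by simp

definition Ff where "Ff s = R s ** A ** R s"
definition Gf where "Gf s = R s ** A ** R s ** A ** R s"

lemma F_small: assumes "0 < s" "s \<le> 1"
  shows "nrm (Ff s) \<le> (real CARD('n) + real CARD('n) * real CARD('n))^2 * nrm Q^2 * nrm A"
proof -
  let ?c = "real CARD('n) + real CARD('n) * real CARD('n)"
  have "Ff s = (R s ** M) ** Q ** A ** Q ** (M ** R s)"
  proof -
    have "Ff s = R s ** ((M ** Q) ** A) ** R s" by (simp add: Ff_def EA)
    also have "\<dots> = R s ** ((M ** Q) ** (A ** (Q ** M))) ** R s" by (simp add: AE Q(2)[symmetric])
    also have "\<dots> = (R s ** M) ** Q ** A ** Q ** (M ** R s)"
      by (simp add: matrix_mul_assoc)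
    finally show ?thesis .
  qed
  also have "nrm \<dots> \<le> nrm (R s ** M) * nrm Q * nrm A * nrm Q * nrm (M ** R s)"
    by (meson nrm_mult order_trans mult_right_mono nrm_nonneg mult_nonneg_nonneg)
  also have "\<dots> \<le> ?c * nrm Q * nrm A * nrm Q * ?c"
    by (intro mult_mono RM_nrm[OF assms] MR_nrm[OF assms] order_refl mult_nonneg_nonneg nrm_nonneg) simp_all
  finally show ?thesis by (simp add: power2_eq_square mult_ac)
qed

lemma AR_small: assumes "0 < s" "s \<le> 1"
  shows "nrm (A ** R s) \<le> nrm A * nrm Q * (real CARD('n) + real CARD('n) * real CARD('n))"
proof -
  have "A ** R s = (A ** Q) ** (M ** R s)"
    using AE Q(2) by (metis matrix_mul_assoc)
  then have "nrm (A ** R s) \<le> nrm A * nrm Q * nrm (M ** R s)"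
    using nrm_mult3[of A Q "M ** R s"] by simp
  also have "\<dots> \<le> nrm A * nrm Q * (real CARD('n) + real CARD('n) * real CARD('n))"
    by (intro mult_left_mono MR_nrm[OF assms]) (simp_all add: nrm_nonneg)
  finally show ?thesis .
qed

lemma G_eq: "Gf s = Ff s ** (A ** R s)"
  by (simp add: Gf_def Ff_def matrix_mul_assoc)

lemma F_large: assumes "1 \<le> s"
  shows "nrm (Ff s) \<le> (real CARD('n) * real CARD('n))^2 * nrm A / s^2"
proof -
  have s0: "0 < s" using assms by simp
  let ?N = "real CARD('n) * real CARD('n)"
  have "nrm (Ff s) \<le> nrm (R s) * nrm A * nrm (R s)" unfolding Ff_def
    by (rule nrm_mult3)
  also have "\<dots> \<le> (?N / s) * nrm A * (?N / s)"
    by (intro mult_mono resolv_nrm[OF pM s0] order_refl mult_nonneg_nonneg nrm_nonneg) (simp_all add: s0 less_imp_le)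
  finally show ?thesis by (simp add: power2_eq_square field_simps)
qed

lemma G_large: assumes "1 \<le> s"
  shows "nrm (Gf s) \<le> (real CARD('n) * real CARD('n))^3 * nrm A^2 / s^2"
proof -
  have s0: "0 < s" using assms by simp
  let ?N = "real CARD('n) * real CARD('n)"
  have "nrm (Gf s) \<le> nrm (Ff s) * (nrm A * nrm (R s))" unfolding G_eq
    by (rule nrm_multX)
  also have "\<dots> \<le> (?N^2 * nrm A / s^2) * (nrm A * (?N / s))"
    by (intro mult_mono F_large[OF assms] resolv_nrm[OF pM s0] mult_left_mono mult_nonneg_nonneg nrm_nonneg)
      (simp_all add: s0 less_imp_le nrm_nonneg)
  also have "\<dots> \<le> (?N^2 * nrm A / s^2) * (nrm A * ?N)"
    using assms by (intro mult_left_mono) (simp_all add: nrm_nonneg field_simps mult_left_mono)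
  finally show ?thesis by (simp add: power2_eq_square power3_eq_cube field_simps)
qed

definition KF where "KF = 4 * ((real CARD('n) + real CARD('n) * real CARD('n))^2 * nrm Q^2 * nrm A)
   + 4 * ((real CARD('n) * real CARD('n))^2 * nrm A)"
definition KG where "KG = 4 * (((real CARD('n) + real CARD('n) * real CARD('n))^2 * nrm Q^2 * nrm A) *
     (nrm A * nrm Q * (real CARD('n) + real CARD('n) * real CARD('n))))
   + 4 * ((real CARD('n) * real CARD('n))^3 * nrm A^2)"

lemma F_bound: assumes "0 < s" shows "nrm (Ff s) \<le> KF / (1 + s)^2"
  unfolding KF_def
  by (rule bound_combine[OF assms F_small[OF assms] F_large]) (simp_all add: nrm_nonneg)

lemma G_bound: assumes "0 < s" shows "nrm (Gf s) \<le> KG / (1 + s)^2"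
  unfolding KG_def
proof (rule bound_combine[OF assms _ G_large])
  assume s1: "s \<le> 1"
  have "nrm (Gf s) \<le> nrm (Ff s) * nrm (A ** R s)" unfolding G_eq by (rule nrm_mult)
  also have "\<dots> \<le> ((real CARD('n) + real CARD('n) * real CARD('n))^2 * nrm Q^2 * nrm A) *
     (nrm A * nrm Q * (real CARD('n) + real CARD('n) * real CARD('n)))"
    by (intro mult_mono F_small[OF assms s1] AR_small[OF assms s1]) (simp_all add: nrm_nonneg)
  finally show "nrm (Gf s) \<le> ((real CARD('n) + real CARD('n) * real CARD('n))^2 * nrm Q^2 * nrm A) *
     (nrm A * nrm Q * (real CARD('n) + real CARD('n) * real CARD('n)))" .
qed (simp_all add: nrm_nonneg)

lemma F_tendsto: assumes "0 < s" shows "(Ff \<longlongrightarrow> Ff s) (at s)"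
  unfolding Ff_def
  by (intro bounded_bilinear.tendsto[OF bb_mm] resolv_cont[OF pM assms] tendsto_const)

lemma G_tendsto: assumes "0 < s" shows "(Gf \<longlongrightarrow> Gf s) (at s)"
  unfolding Gf_def
  by (intro bounded_bilinear.tendsto[OF bb_mm] resolv_cont[OF pM assms] tendsto_const)

lemma F_int: "set_integrable lborel {0<..} Ff"
  by (rule nrm_bound_integrable[OF _ F_bound]) (simp_all add: isCont_def F_tendsto)

lemma G_int: "set_integrable lborel {0<..} Gf"
  by (rule nrm_bound_integrable[OF _ G_bound]) (simp_all add: isCont_def G_tendsto)


definition hf where "hf s = of_real s * trace ((A ** R s) ** (A ** R s))"
definition hd where "hd s = 2 *\<^sub>R trace (M ** Gf s) - trace (A ** Ff s)"

lemma h_deriv: assumes s0: "0 < s" shows "(hf has_vector_derivative hd s) (at s)"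
proof -
  let ?D = "- (R s ** R s)"
  have dR: "(R has_vector_derivative ?D) (at s)" by (rule resolv_deriv[OF pM s0])
  have dX: "((\<lambda>t. A ** R t) has_vector_derivative (A ** ?D)) (at s)"
    by (rule bounded_linear.has_vector_derivative[OF bounded_bilinear.bounded_linear_right[OF bb_mm] dR])
  have dP: "((\<lambda>t. (A ** R t) ** (A ** R t)) has_vector_derivative
      ((A ** R s) ** (A ** ?D) + (A ** ?D) ** (A ** R s))) (at s)"
    by (rule bounded_bilinear.has_vector_derivative[OF bb_mm dX dX])
  have dT: "((\<lambda>t. trace ((A ** R t) ** (A ** R t))) has_vector_derivative
      trace ((A ** R s) ** (A ** ?D) + (A ** ?D) ** (A ** R s))) (at s)"
    by (rule bounded_linear.has_vector_derivative[OF bl_trace dP])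
  have dS: "((\<lambda>t. of_real t :: complex) has_vector_derivative of_real 1) (at s)"
    by (rule has_vector_derivative_of_real) (rule DERIV_ident)
  have dh: "(hf has_vector_derivative (of_real s * trace ((A ** R s) ** (A ** ?D) + (A ** ?D) ** (A ** R s))
      + of_real 1 * trace ((A ** R s) ** (A ** R s)))) (at s)"
    unfolding hf_def[abs_def] by (rule has_vector_derivative_mult[OF dS dT])
  define \<tau> where "\<tau> = trace (R s ** A ** R s ** A ** R s)"
  define \<phi> where "\<phi> = trace (A ** R s ** A ** R s)"
  have t1: "trace (A ** R s ** A ** R s ** R s) = \<tau>"
    unfolding \<tau>_def using trace_mul_sym[of "A ** R s ** A ** R s" "R s"] by (simp add: matrix_mul_assoc)
  have t2: "trace (A ** R s ** R s ** A ** R s) = \<tau>"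
  proof -
    have "trace (A ** R s ** R s ** A ** R s) = trace (R s ** R s ** A ** R s ** A)"
      using trace_mul_sym[of A "R s ** R s ** A ** R s"] by (simp add: matrix_mul_assoc)
    also have "\<dots> = trace (R s ** A ** R s ** A ** R s)"
      using trace_mul_sym[of "R s" "R s ** A ** R s ** A"] by (simp add: matrix_mul_assoc)
    finally show ?thesis unfolding \<tau>_def .
  qed
  have e1: "trace ((A ** R s) ** (A ** ?D) + (A ** ?D) ** (A ** R s)) = - 2 * \<tau>"
    using t1 t2 by (simp add: mm_simps matrix_mul_assoc trace_add trace_sub trace_uminus)
  have e2: "trace ((A ** R s) ** (A ** R s)) = \<phi>" by (simp add: \<phi>_def matrix_mul_assoc)
  have e3: "trace (A ** Ff s) = \<phi>" by (simp add: \<phi>_def Ff_def matrix_mul_assoc)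
  have e4: "trace (M ** Gf s) = \<phi> - of_real s * \<tau>"
  proof -
    have "M ** Gf s = (M ** R s) ** A ** R s ** A ** R s" by (simp add: Gf_def matrix_mul_assoc)
    also have "\<dots> = A ** R s ** A ** R s - s *\<^sub>R (R s ** A ** R s ** A ** R s)"
      unfolding resolv_MR(1)[OF pM s0] by (simp add: mm_simps)
    finally show ?thesis
      by (simp add: \<phi>_def \<tau>_def trace_sub trace_scaleR del: scaleR_conv_of_real) (simp add: scaleR_conv_of_real)
  qed
  have "of_real s * trace ((A ** R s) ** (A ** ?D) + (A ** ?D) ** (A ** R s))
      + of_real 1 * trace ((A ** R s) ** (A ** R s)) = hd s"
    unfolding hd_def e1 e2 e3 e4 by (simp add: scaleR_conv_of_real algebra_simps)
  with dh show ?thesis by simp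
qed

lemma hd_tendsto: assumes "0 < s" shows "(hd \<longlongrightarrow> hd s) (at s)"
  unfolding hd_def
  by (intro tendsto_intros bounded_linear.tendsto[OF bl_trace]
      bounded_bilinear.tendsto[OF bb_mm] tendsto_const F_tendsto[OF assms] G_tendsto[OF assms])

lemma hd_bound: assumes "0 < s" shows "norm (hd s) \<le> (2 * nrm M * KG + nrm A * KF) / (1 + s)^2"
proof -
  have "norm (hd s) \<le> 2 * cmod (trace (M ** Gf s)) + cmod (trace (A ** Ff s))"
    unfolding hd_def by (rule order_trans[OF norm_triangle_ineq4]) simp
  also have "\<dots> \<le> 2 * (nrm M * (KG / (1 + s)^2)) + nrm A * (KF / (1 + s)^2)"
  proof (intro add_mono mult_left_mono)
    show "cmod (trace (M ** Gf s)) \<le> nrm M * (KG / (1 + s)^2)"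
      using order_trans[OF trace_nrm nrm_mult] mult_left_mono[OF G_bound[OF assms] nrm_nonneg]
      by (meson order_trans)
    show "cmod (trace (A ** Ff s)) \<le> nrm A * (KF / (1 + s)^2)"
      using order_trans[OF trace_nrm nrm_mult] mult_left_mono[OF F_bound[OF assms] nrm_nonneg]
      by (meson order_trans)
  qed simp
  finally show ?thesis by (simp add: add_divide_distrib algebra_simps)
qed

lemma hd_int: "set_integrable lborel {0<..} hd"
  by (rule norm_bound_integrable[OF _ hd_bound]) (simp_all add: isCont_def hd_tendsto)

lemma KF_nonneg: "0 \<le> KF" by (simp add: KF_def nrm_nonneg)

lemma hf_bound: assumes "0 < s" shows "norm (hf s) \<le> s * (nrm A * KF) / (1 + s)^2"
proof -
  have "(A ** R s) ** (A ** R s) = A ** Ff s" by (simp add: Ff_def matrix_mul_assoc)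
  then have "norm (hf s) = s * cmod (trace (A ** Ff s))" using assms by (simp add: hf_def norm_mult)
  also have "\<dots> \<le> s * (nrm A * (KF / (1 + s)^2))"
    using order_trans[OF trace_nrm nrm_mult] mult_left_mono[OF F_bound[OF assms] nrm_nonneg] assms
    by (meson order_trans mult_left_mono less_imp_le)
  finally show ?thesis by simp
qed

lemma hf_0: "((hf \<circ> real_of_ereal) \<longlongrightarrow> 0) (at_right 0)"
proof -
  have "(hf \<longlongrightarrow> 0) (at_right 0)"
  proof (rule Lim_null_comparison)
    show "\<forall>\<^sub>F s in at_right 0. norm (hf s) \<le> s * (nrm A * KF) / (1 + s)^2"
      using eventually_at_right_less[of "0::real"] by eventually_elim (rule hf_bound)
    have "isCont (\<lambda>s::real. s * (nrm A * KF) / (1 + s)^2) 0" by (intro continuous_intros) auto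
    then have "((\<lambda>s::real. s * (nrm A * KF) / (1 + s)^2) \<longlongrightarrow> 0) (at 0)" by (simp add: isCont_def)
    then show "((\<lambda>s::real. s * (nrm A * KF) / (1 + s)^2) \<longlongrightarrow> 0) (at_right 0)"
      by (rule tendsto_mono[OF at_le, rotated]) simp
  qed
  then show ?thesis unfolding zero_ereal_def ereal_tendsto_simps .
qed

lemma hf_inf: "((hf \<circ> real_of_ereal) \<longlongrightarrow> 0) (at_left \<infinity>)"
proof -
  have "(hf \<longlongrightarrow> 0) at_top"
  proof (rule Lim_null_comparison)
    show "\<forall>\<^sub>F s in at_top. norm (hf s) \<le> s * (nrm A * KF) / (1 + s)^2"
      using eventually_gt_at_top[of "0::real"] by eventually_elim (rule hf_bound)
    show "((\<lambda>s::real. s * (nrm A * KF) / (1 + s)^2) \<longlongrightarrow> 0) at_top"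
      by real_asymp
  qed
  then show ?thesis unfolding ereal_tendsto_simps .
qed

lemma hd_integral: "integral {0<..} hd = 0"
proof -
  have "(LBINT x=0..\<infinity>. hd x) = 0 - 0"
  proof (rule interval_integral_FTC_integrable[where F=hf])
    show "(0::ereal) < \<infinity>" by simp
    show "(hf has_vector_derivative hd x) (at x)" if "0 < ereal x" "ereal x < \<infinity>" for x
      using that by (intro h_deriv) simp
    show "isCont hd x" if "0 < ereal x" "ereal x < \<infinity>" for x
      using that hd_tendsto[of x] by (simp add: isCont_def)
    show "set_integrable lborel (einterval 0 \<infinity>) hd" using hd_int by (simp add: zero_ereal_def)
  qed (rule hf_0, rule hf_inf)
  then have "(LINT x:{0<..}|lborel. hd x) = 0" by (simp add: interval_lebesgue_integral_0_infty)
  then show ?thesis using set_borel_integral_eq_integral(2)[OF hd_int] by simp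
qed

lemma main_eq: "trace (M ** Rmap M A) = trace (A ** Tmap M A)"
proof -
  have Fi: "Ff integrable_on {0<..}" using set_borel_integral_eq_integral(1)[OF F_int] .
  have Gi: "Gf integrable_on {0<..}" using set_borel_integral_eq_integral(1)[OF G_int] .
  have T: "Tmap M A = integral {0<..} Ff" by (simp add: Tmap_def Ff_def[abs_def])
  have Rm: "Rmap M A = 2 *\<^sub>R integral {0<..} Gf" by (simp add: Rmap_def Gf_def[abs_def])
  have i1: "trace (A ** integral {0<..} Ff) = integral {0<..} (\<lambda>s. trace (A ** Ff s))"
    using integral_linear[OF Fi bl_trace_mult[of "A"]] unfolding comp_def by (simp only:)
  have i2: "trace (M ** integral {0<..} Gf) = integral {0<..} (\<lambda>s. trace (M ** Gf s))"
    using integral_linear[OF Gi bl_trace_mult[of "M"]] unfolding comp_def by (simp only:)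
  have j1: "(\<lambda>s. trace (A ** Ff s)) integrable_on {0<..}"
    using integrable_linear[OF Fi bl_trace_mult[of A]] unfolding comp_def .
  have j2: "(\<lambda>s. 2 *\<^sub>R trace (M ** Gf s)) integrable_on {0<..}"
    using integrable_cmul[OF integrable_linear[OF Gi bl_trace_mult[of M]]] unfolding comp_def .
  have "trace (M ** Rmap M A) - trace (A ** Tmap M A)
      = integral {0<..} (\<lambda>s. 2 *\<^sub>R trace (M ** Gf s)) - integral {0<..} (\<lambda>s. trace (A ** Ff s))"
    unfolding T Rm mm_scaleR_right trace_scaleR i1 i2 integral_cmul ..
  also have "\<dots> = integral {0<..} hd"
    unfolding hd_def by (rule integral_diff[OF j2 j1, symmetric])
  also have "\<dots> = 0" by (rule hd_integral)
  finally show ?thesis by simp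
qed

end


theorem lemma4:
  fixes A B :: "complex^'n^'n"
  assumes "psd A" and "psd B"
  shows "trace ((A + B) ** Rmap (A + B) A) \<ge> trace (A ** Tmap (A + B) A)"
proof -
  interpret L A B using assms by unfold_locales
  have "trace ((A + B) ** Rmap (A + B) A) = trace (A ** Tmap (A + B) A)" by (rule main_eq)
  then show ?thesis by simp
qed

end
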